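(* Let $v:[\underline s,\overline s]\times\mathbb R\to[0,1]$ be four-times differentiable, strictly increasing in $s$ (with $\partial v/\partial s>0$), and strictly decreasing in $r$. Say that Assumption 1 (swingy moderates) holds if $$\frac{\partial^2}{\partial s\,\partial r}\ln\!\left(\frac{\partial v(s,r)}{\partial s}\right)>0\quad\text{for all } s,r.$$ Then: (1) If $v(s,r)=Q(s-r)$ for all $(s,r)$, where $Q$ is the cdf of a taste shock with strictly positive, differentiable density $q$, then Assumption 1 holds if and only if $q$ is strictly log-concave, i.e. $\frac{d^2}{dt^2}\ln q(t)<0$ for all $t$. (2) Assumption 1 implies that, for each $r$, the function $s\mapsto \partial v(s,r)/\partial r$ is strictly single-dipped (first decreasing, then increasing) in $s$.
   Context: $v(s,r)$ is interpreted as the share of type-$s$ voters voting for the designer's party when the aggregate shock is $r$. *)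

theory Defs
  imports "HOL-Analysis.Analysis"
begin

fun n_times_differentiable_on ::
  "nat \<Rightarrow> ('a::real_normed_vector \<Rightarrow> 'b::real_normed_vector) \<Rightarrow> 'a set \<Rightarrow> bool" where
  "n_times_differentiable_on 0 f U = True"
| "n_times_differentiable_on (Suc n) f U =
     ((\<forall>x\<in>U. f differentiable (at x)) \<and>
      (\<forall>h. n_times_differentiable_on n (\<lambda>x. frechet_derivative f (at x) h) U))"

definition dv_ds :: "(real \<Rightarrow> real \<Rightarrow> real) \<Rightarrow> real \<Rightarrow> real \<Rightarrow> real" where
  "dv_ds v s r = deriv (\<lambda>s'. v s' r) s"

definition dv_dr :: "(real \<Rightarrow> real \<Rightarrow> real) \<Rightarrow> real \<Rightarrow> real \<Rightarrow> real" where
  "dv_dr v s r = deriv (\<lambda>r'. v s r') r"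

definition swingy_moderates :: "(real \<Rightarrow> real \<Rightarrow> real) \<Rightarrow> real \<Rightarrow> real \<Rightarrow> bool" where
  "swingy_moderates v lo hi \<longleftrightarrow>
     (\<forall>s\<in>{lo..hi}. \<forall>r.
        deriv (\<lambda>s'. deriv (\<lambda>r'. ln (dv_ds v s' r')) r) s > 0)"

definition strictly_single_dipped :: "(real \<Rightarrow> real) \<Rightarrow> real \<Rightarrow> real \<Rightarrow> bool" where
  "strictly_single_dipped f lo hi \<longleftrightarrow>
     (\<exists>m\<in>{lo..hi}.
        (\<forall>x\<in>{lo..m}. \<forall>y\<in>{lo..m}. x < y \<longrightarrow> f y < f x) \<and>
        (\<forall>x\<in>{m..hi}. \<forall>y\<in>{m..hi}. x < y \<longrightarrow> f x < f y))"

end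

theory Submission
  imports Defs
begin

lemma partial1:
  fixes G :: "real \<times> real \<Rightarrow> real"
  assumes "G differentiable (at (x, y))"
  shows "((\<lambda>x'. G (x', y)) has_real_derivative frechet_derivative G (at (x, y)) (1, 0)) (at x)"
proof -
  let ?L = "frechet_derivative G (at (x, y))"
  have G: "(G has_derivative ?L) (at (x, y))" using assms frechet_derivative_works by blast
  have lin: "linear ?L" using G has_derivative_linear by blast
  have P: "((\<lambda>x'. (x', y)) has_derivative (\<lambda>h. (h, 0))) (at x)"
    by (auto intro!: derivative_eq_intros)
  have "(G \<circ> (\<lambda>x'. (x', y)) has_derivative ?L \<circ> (\<lambda>h. (h, 0))) (at x)"
    by (rule diff_chain_at[OF P]) (use G in simp)
  moreover have "?L \<circ> (\<lambda>h. (h, 0)) = (*) (?L (1, 0))"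
  proof
    fix h :: real
    have "?L (h, 0) = ?L (h *\<^sub>R (1, 0))" by simp
    also have "\<dots> = h *\<^sub>R ?L (1, 0)" using linear_cmul[OF lin] by blast
    finally show "(?L \<circ> (\<lambda>h. (h, 0))) h = ?L (1, 0) * h" by simp
  qed
  ultimately show ?thesis by (simp add: has_field_derivative_def o_def)
qed

lemma partial2:
  fixes G :: "real \<times> real \<Rightarrow> real"
  assumes "G differentiable (at (x, y))"
  shows "((\<lambda>y'. G (x, y')) has_real_derivative frechet_derivative G (at (x, y)) (0, 1)) (at y)"
proof -
  let ?L = "frechet_derivative G (at (x, y))"
  have G: "(G has_derivative ?L) (at (x, y))" using assms frechet_derivative_works by blast
  have lin: "linear ?L" using G has_derivative_linear by blast
  have P: "((\<lambda>y'. (x, y')) has_derivative (\<lambda>h. (0, h))) (at y)"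
    by (auto intro!: derivative_eq_intros)
  have "(G \<circ> (\<lambda>y'. (x, y')) has_derivative ?L \<circ> (\<lambda>h. (0, h))) (at y)"
    by (rule diff_chain_at[OF P]) (use G in simp)
  moreover have "?L \<circ> (\<lambda>h. (0, h)) = (*) (?L (0, 1))"
  proof
    fix h :: real
    have "?L (0, h) = ?L (h *\<^sub>R (0, 1))" by simp
    also have "\<dots> = h *\<^sub>R ?L (0, 1)" using linear_cmul[OF lin] by blast
    finally show "(?L \<circ> (\<lambda>h. (0, h))) h = ?L (0, 1) * h" by simp
  qed
  ultimately show ?thesis by (simp add: has_field_derivative_def o_def)
qed

lemma deriv_eq_on_interval:
  fixes f g :: "real \<Rightarrow> real"
  assumes "lo < hi" "x \<in> {lo..hi}" "(f has_real_derivative a) (at x)"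
    "(g has_real_derivative b) (at x)" "\<forall>y\<in>{lo..hi}. f y = g y"
  shows "a = b"
proof -
  have f: "(f has_derivative (*) a) (at x within cbox lo hi)"
    using has_field_derivative_at_within[OF assms(3)] by (simp add: has_field_derivative_def)
  have g0: "(g has_derivative (*) b) (at x within cbox lo hi)"
    using has_field_derivative_at_within[OF assms(4)] by (simp add: has_field_derivative_def)
  have g: "(f has_derivative (*) b) (at x within cbox lo hi)"
    by (rule has_derivative_transform_within[OF g0, of 1]) (use assms in auto)
  have "(*) a = (*) b"
    by (rule frechet_derivative_unique_within_closed_interval[OF _ _ f g]) (use assms in auto)
  then show ?thesis by (metis mult.right_neutral)
qed

lemma clairaut:
  fixes F :: "real \<times> real \<Rightarrow> real"
  defines "D1 \<equiv> (\<lambda>z. frechet_derivative F (at z) (1, 0))"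
    and "D2 \<equiv> (\<lambda>z. frechet_derivative F (at z) (0, 1))"
  assumes U: "open U" and p: "(a, b) \<in> U"
    and dF: "\<forall>z\<in>U. F differentiable (at z)"
    and d1: "\<forall>z\<in>U. D1 differentiable (at z)"
    and d2: "\<forall>z\<in>U. D2 differentiable (at z)"
    and c12: "continuous (at (a, b)) (\<lambda>z. frechet_derivative D1 (at z) (0, 1))"
    and c21: "continuous (at (a, b)) (\<lambda>z. frechet_derivative D2 (at z) (1, 0))"
  shows "frechet_derivative D1 (at (a, b)) (0, 1) = frechet_derivative D2 (at (a, b)) (1, 0)"
proof (rule ccontr)
  define D12 where "D12 = (\<lambda>z. frechet_derivative D1 (at z) (0, 1))"
  define D21 where "D21 = (\<lambda>z. frechet_derivative D2 (at z) (1, 0))"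
  assume ne: "frechet_derivative D1 (at (a, b)) (0, 1) \<noteq> frechet_derivative D2 (at (a, b)) (1, 0)"
  define \<epsilon> where "\<epsilon> = \<bar>D12 (a, b) - D21 (a, b)\<bar> / 2"
  have epos: "\<epsilon> > 0" using ne by (simp add: \<epsilon>_def D12_def D21_def)
  obtain e where e: "e > 0" "ball (a, b) e \<subseteq> U" using U p open_contains_ball by blast
  obtain d1' where d1': "d1' > 0" "\<forall>z. dist z (a, b) < d1' \<longrightarrow> dist (D12 z) (D12 (a, b)) < \<epsilon>"
    using c12 epos unfolding continuous_at_eps_delta D12_def by blast
  obtain d2' where d2': "d2' > 0" "\<forall>z. dist z (a, b) < d2' \<longrightarrow> dist (D21 z) (D21 (a, b)) < \<epsilon>"
    using c21 epos unfolding continuous_at_eps_delta D21_def by blast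
  define t where "t = min e (min d1' d2') / 3"
  have tpos: "t > 0" using e d1' d2' by (simp add: t_def)
  have inU: "(x, y) \<in> U" and close1: "dist (x, y) (a, b) < d1'" and close2: "dist (x, y) (a, b) < d2'"
    if "a \<le> x" "x \<le> a + t" "b \<le> y" "y \<le> b + t" for x y
  proof -
    have "dist (x, y) (a, b) \<le> \<bar>x - a\<bar> + \<bar>y - b\<bar>"
      unfolding dist_Pair_Pair dist_real_def using sqrt_sum_squares_le_sum_abs[of "x - a" "y - b"] by simp
    also have "\<dots> \<le> 2 * t" using that by auto
    finally have "dist (x, y) (a, b) \<le> 2 * t" .
    moreover have "2 * t < e" "2 * t < d1'" "2 * t < d2'" using e d1' d2' by (auto simp: t_def)
    ultimately have "dist (a, b) (x, y) < e" "dist (x, y) (a, b) < d1'" "dist (x, y) (a, b) < d2'"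
      by (auto simp: dist_commute)
    then show "(x, y) \<in> U" "dist (x, y) (a, b) < d1'" "dist (x, y) (a, b) < d2'" using e(2) by auto
  qed
  define \<Delta> where "\<Delta> = F (a + t, b + t) - F (a + t, b) - F (a, b + t) + F (a, b)"
  have "\<exists>z>a. z < a + t \<and> (F (a + t, b + t) - F (a + t, b)) - (F (a, b + t) - F (a, b))
          = (a + t - a) * (D1 (z, b + t) - D1 (z, b))"
    by (rule MVT2[of a "a + t" "\<lambda>x. F (x, b + t) - F (x, b)"])
       (use tpos in \<open>auto intro!: DERIV_diff partial1[unfolded D1_def[symmetric]] simp: D1_def dF inU\<close>)
  then obtain \<xi> where xi: "a < \<xi>" "\<xi> < a + t" "\<Delta> = t * (D1 (\<xi>, b + t) - D1 (\<xi>, b))"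
    by (auto simp: \<Delta>_def algebra_simps)
  have "\<exists>z>b. z < b + t \<and> D1 (\<xi>, b + t) - D1 (\<xi>, b) = (b + t - b) * D12 (\<xi>, z)"
    by (rule MVT2[of b "b + t" "\<lambda>y. D1 (\<xi>, y)"])
       (use tpos xi in \<open>auto intro!: partial2 simp: D12_def d1 inU\<close>)
  then obtain \<eta> where eta: "b < \<eta>" "\<eta> < b + t" "D1 (\<xi>, b + t) - D1 (\<xi>, b) = t * D12 (\<xi>, \<eta>)"
    by auto
  have "\<exists>z>b. z < b + t \<and> (F (a + t, b + t) - F (a, b + t)) - (F (a + t, b) - F (a, b))
          = (b + t - b) * (D2 (a + t, z) - D2 (a, z))"
    by (rule MVT2[of b "b + t" "\<lambda>y. F (a + t, y) - F (a, y)"])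
       (use tpos in \<open>auto intro!: DERIV_diff partial2[unfolded D2_def[symmetric]] simp: D2_def dF inU\<close>)
  then obtain \<eta>' where eta': "b < \<eta>'" "\<eta>' < b + t" "\<Delta> = t * (D2 (a + t, \<eta>') - D2 (a, \<eta>'))"
    by (auto simp: \<Delta>_def algebra_simps)
  have "\<exists>z>a. z < a + t \<and> D2 (a + t, \<eta>') - D2 (a, \<eta>') = (a + t - a) * D21 (z, \<eta>')"
    by (rule MVT2[of a "a + t" "\<lambda>x. D2 (x, \<eta>')"])
       (use tpos eta' in \<open>auto intro!: partial1 simp: D21_def d2 inU\<close>)
  then obtain \<xi>' where xi': "a < \<xi>'" "\<xi>' < a + t" "D2 (a + t, \<eta>') - D2 (a, \<eta>') = t * D21 (\<xi>', \<eta>')"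
    by auto
  have "t * (t * D12 (\<xi>, \<eta>)) = t * (t * D21 (\<xi>', \<eta>'))"
    using xi eta eta' xi' by simp
  then have eq: "D12 (\<xi>, \<eta>) = D21 (\<xi>', \<eta>')" using tpos by simp
  have "dist (D12 (\<xi>, \<eta>)) (D12 (a, b)) < \<epsilon>"
    using d1'(2) close1[of \<xi> \<eta>] xi eta by auto
  moreover have "dist (D21 (\<xi>', \<eta>')) (D21 (a, b)) < \<epsilon>"
    using d2'(2) close2[of \<xi>' \<eta>'] xi' eta' by auto
  ultimately have "\<bar>D12 (a, b) - D21 (a, b)\<bar> < 2 * \<epsilon>"
    using eq by (auto simp: dist_real_def)
  then show False by (simp add: \<epsilon>_def)
qed

lemma shift_deriv:
  fixes f :: "real \<Rightarrow> real"
  assumes "(f has_real_derivative D) (at (x - c))"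
  shows "((\<lambda>y. f (y - c)) has_real_derivative D) (at x)"
proof -
  have "((\<lambda>y. y - c) has_real_derivative 1) (at x)" by (auto intro!: derivative_eq_intros)
  from DERIV_chain2[where f=f and g="\<lambda>y. y - c", OF assms this] show ?thesis by simp
qed

lemma refl_deriv:
  fixes f :: "real \<Rightarrow> real"
  assumes "(f has_real_derivative D) (at (c - x))"
  shows "((\<lambda>y. f (c - y)) has_real_derivative - D) (at x)"
proof -
  have "((\<lambda>y. c - y) has_real_derivative -1) (at x)" by (auto intro!: derivative_eq_intros)
  from DERIV_chain2[where f=f and g="\<lambda>y. c - y", OF assms this] show ?thesis by simp
qed

lemma main:
  fixes v :: "real \<Rightarrow> real \<Rightarrow> real" and lo hi :: real and U :: "(real \<times> real) set"
  assumes lohi: "lo < hi"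
    and U_open: "open U" and U_dom: "{lo..hi} \<times> UNIV \<subseteq> U"
    and v_diff4: "n_times_differentiable_on 4 (\<lambda>(s, r). v s r) U"
    and v_s_pos: "\<forall>s\<in>{lo..hi}. \<forall>r. dv_ds v s r > 0"
  shows "(\<forall>Q q :: real \<Rightarrow> real.
            ((\<forall>t. (Q has_real_derivative q t) (at t)) \<and>
             (Q \<longlongrightarrow> 0) at_bot \<and> (Q \<longlongrightarrow> 1) at_top \<and>
             (\<forall>t. q t > 0) \<and> (\<forall>t. q differentiable (at t)) \<and>
             (\<forall>s\<in>{lo..hi}. \<forall>r. v s r = Q (s - r)))
            \<longrightarrow> (swingy_moderates v lo hi \<longleftrightarrow>
                 (\<forall>t. deriv (deriv (\<lambda>t'. ln (q t'))) t < 0))) \<and>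
         (swingy_moderates v lo hi \<longrightarrow>
           (\<forall>r. strictly_single_dipped (\<lambda>s. dv_dr v s r) lo hi))"
proof -
  define F where "F = (\<lambda>(s, r). v s r)"
  define D1 where "D1 = (\<lambda>z. frechet_derivative F (at z) (1, 0))"
  define D2 where "D2 = (\<lambda>z. frechet_derivative F (at z) (0, 1))"
  define D12 where "D12 = (\<lambda>z. frechet_derivative D1 (at z) (0, 1))"
  define D21 where "D21 = (\<lambda>z. frechet_derivative D2 (at z) (1, 0))"
  have n4: "n_times_differentiable_on (Suc (Suc (Suc (Suc 0)))) F U"
    using v_diff4 by (simp add: F_def numeral_eq_Suc)
  have dF: "\<forall>z\<in>U. F differentiable (at z)"
    and B: "\<forall>h. n_times_differentiable_on (Suc (Suc (Suc 0))) (\<lambda>x. frechet_derivative F (at x) h) U"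
    using n4 by simp_all
  have B1: "n_times_differentiable_on (Suc (Suc (Suc 0))) D1 U"
    using B[rule_format, of "(1, 0)"] by (simp add: D1_def)
  have B2: "n_times_differentiable_on (Suc (Suc (Suc 0))) D2 U"
    using B[rule_format, of "(0, 1)"] by (simp add: D2_def)
  have dD1: "\<forall>z\<in>U. D1 differentiable (at z)" using B1 by simp
  have dD2: "\<forall>z\<in>U. D2 differentiable (at z)" using B2 by simp
  have dD12: "\<forall>z\<in>U. D12 differentiable (at z)"
    using B1 unfolding D12_def by simp
  have dD21: "\<forall>z\<in>U. D21 differentiable (at z)"
    using B2 unfolding D21_def by simp
  have sym: "D12 (a, b) = D21 (a, b)" if "(a, b) \<in> U" for a b
    unfolding D12_def D21_def D1_def D2_def
    by (rule clairaut[OF U_open that dF dD1[unfolded D1_def] dD2[unfolded D2_def]])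
       (use that dD12 dD21 differentiable_imp_continuous_within in \<open>unfold D12_def D21_def D1_def D2_def; blast\<close>)+
  have inU: "(s, r) \<in> U" if "s \<in> {lo..hi}" for s r using U_dom that by auto
  have dv_ds_eq: "dv_ds v s r = D1 (s, r)" if "(s, r) \<in> U" for s r
  proof -
    have "((\<lambda>x'. F (x', r)) has_real_derivative D1 (s, r)) (at s)"
      unfolding D1_def by (rule partial1) (use dF that in auto)
    then show ?thesis unfolding dv_ds_def F_def by (simp add: DERIV_imp_deriv)
  qed
  have dv_dr_eq: "dv_dr v s r = D2 (s, r)" if "(s, r) \<in> U" for s r
  proof -
    have "((\<lambda>y'. F (s, y')) has_real_derivative D2 (s, r)) (at r)"
      unfolding D2_def by (rule partial2) (use dF that in auto)
    then show ?thesis unfolding dv_dr_def F_def by (simp add: DERIV_imp_deriv)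
  qed
  have D1pos: "D1 (s, r) > 0" if "s \<in> {lo..hi}" for s r
    using v_s_pos that dv_ds_eq[OF inU[OF that]] by (metis)
  have P1: "((\<lambda>x'. G (x', y)) has_real_derivative frechet_derivative G (at (x, y)) (1, 0)) (at x)"
    if "\<forall>z\<in>U. G differentiable (at z)" "(x, y) \<in> U" for G :: "real \<times> real \<Rightarrow> real" and x y
    by (rule partial1) (use that in auto)
  have P2: "((\<lambda>y'. G (x, y')) has_real_derivative frechet_derivative G (at (x, y)) (0, 1)) (at y)"
    if "\<forall>z\<in>U. G differentiable (at z)" "(x, y) \<in> U" for G :: "real \<times> real \<Rightarrow> real" and x y
    by (rule partial2) (use that in auto)
  define H where "H = (\<lambda>r s. deriv (\<lambda>r'. ln (dv_ds v s r')) r)"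
  have Hval: "H r s = D12 (s, r) / D1 (s, r)" if "(s, r) \<in> U" "D1 (s, r) > 0" for s r
  proof -
    have op: "open (Pair s -` U)" by (rule open_vimage[OF U_open]) (intro continuous_intros)
    have ev: "\<forall>\<^sub>F r' in nhds r. ln (D1 (s, r')) = ln (dv_ds v s r')"
      using eventually_nhds_in_open[OF op, of r] that(1)
      by (simp add: eventually_mono dv_ds_eq)
    have "((\<lambda>r'. ln (D1 (s, r'))) has_real_derivative D12 (s, r) / D1 (s, r)) (at r)"
      using P2[OF dD1 that(1)] that(2) unfolding D12_def
      by (auto intro!: derivative_eq_intros simp: field_simps)
    then have "((\<lambda>r'. ln (dv_ds v s r')) has_real_derivative D12 (s, r) / D1 (s, r)) (at r)"
      using DERIV_cong_ev[OF refl ev refl] by simp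
    then show ?thesis unfolding H_def by (rule DERIV_imp_deriv)
  qed
  have Hdiff: "(H r has_real_derivative deriv (H r) s) (at s)" if s: "s \<in> {lo..hi}" for s r
  proof -
    have op: "open ((\<lambda>s'. (s', r)) -` U)" by (rule open_vimage[OF U_open]) (intro continuous_intros)
    have ev1: "\<forall>\<^sub>F s' in nhds s. (s', r) \<in> U"
      using eventually_nhds_in_open[OF op] inU[OF s] by auto
    have c: "isCont (\<lambda>s'. D1 (s', r)) s"
      using P1[OF dD1 inU[OF s]] DERIV_isCont by blast
    have "\<forall>\<^sub>F s' in at s. D1 (s', r) > 0"
      using order_tendstoD(1)[OF c[unfolded isCont_def] D1pos[OF s]] .
    then have ev2: "\<forall>\<^sub>F s' in nhds s. D1 (s', r) > 0"
      unfolding eventually_at_filter using D1pos[OF s] by (auto elim!: eventually_mono)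
    have ev: "\<forall>\<^sub>F s' in nhds s. D12 (s', r) / D1 (s', r) = H r s'"
      using eventually_conj[OF ev1 ev2] by (auto elim!: eventually_mono simp: Hval)
    obtain X where X: "((\<lambda>s'. D12 (s', r) / D1 (s', r)) has_real_derivative X) (at s)"
      using DERIV_divide[OF P1[OF dD12 inU[OF s, of r]] P1[OF dD1 inU[OF s, of r]]] D1pos[OF s, of r] by fastforce
    then have "(H r has_real_derivative X) (at s)"
      using DERIV_cong_ev[OF refl ev refl] by simp
    then show ?thesis using DERIV_imp_deriv by metis
  qed
  have sw_iff: "swingy_moderates v lo hi \<longleftrightarrow> (\<forall>s\<in>{lo..hi}. \<forall>r. deriv (H r) s > 0)"
    unfolding swingy_moderates_def H_def by simp
  have part2: "strictly_single_dipped (\<lambda>s. dv_dr v s r) lo hi"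
    if sw: "swingy_moderates v lo hi" for r
  proof -
    have hpos: "deriv (H r) s > 0" if "s \<in> {lo..hi}" for s using sw sw_iff that by blast
    have mono: "H r x < H r y" if "x \<in> {lo..hi}" "y \<in> {lo..hi}" "x < y" for x y
    proof -
      have "\<exists>z>x. z < y \<and> H r y - H r x = (y - x) * deriv (H r) z"
        by (rule MVT2[OF that(3)]) (use that in \<open>auto intro!: Hdiff\<close>)
      then obtain z where "x < z" "z < y" "H r y - H r x = (y - x) * deriv (H r) z" by blast
      moreover have "deriv (H r) z > 0" using hpos that \<open>x < z\<close> \<open>z < y\<close> by auto
      ultimately show ?thesis using that by (smt (verit) mult_pos_pos)
    qed
    have D12H: "D12 (s, r) = H r s * D1 (s, r)" if "s \<in> {lo..hi}" for s
      using Hval[OF inU[OF that] D1pos[OF that]] D1pos[OF that, of r] by simp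
    have g0d: "((\<lambda>s'. D2 (s', r)) has_real_derivative D12 (s, r)) (at s)" if "s \<in> {lo..hi}" for s
      using P1[OF dD2 inU[OF that]] sym[OF inU[OF that]] unfolding D21_def by simp
    define A where "A = {s\<in>{lo..hi}. H r s < 0}"
    define m where "m = Sup (insert lo A)"
    have bdd: "bdd_above (insert lo A)" unfolding A_def bdd_above_def using lohi by (intro exI[of _ hi]) auto
    have m_ge: "lo \<le> m" unfolding m_def using bdd by (simp add: cSup_upper)
    have m_le: "m \<le> hi" unfolding m_def using lohi by (intro cSup_least) (auto simp: A_def)
    have neg: "H r s < 0" if hs: "s \<in> {lo..hi}" "s < m" for s
    proof -
      obtain a where a: "a \<in> insert lo A" "s < a"
        using hs(2) less_cSup_iff[OF _ bdd] unfolding m_def by blast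
      then have "a \<in> A" using hs(1) by auto
      then show ?thesis using mono[OF hs(1), of a] a unfolding A_def by auto
    qed
    have pos: "H r s > 0" if "s \<in> {lo..hi}" "m < s" for s
    proof -
      define s' where "s' = (m + s) / 2"
      have s': "s' \<in> {lo..hi}" "m < s'" "s' < s" using that m_ge by (auto simp: s'_def)
      have "s' \<notin> A"
      proof
        assume "s' \<in> A"
        then have "s' \<le> m" unfolding m_def using bdd by (simp add: cSup_upper)
        then show False using s' by simp
      qed
      then have "H r s' \<ge> 0" using s' unfolding A_def by auto
      then show ?thesis using mono[OF s'(1) that(1) s'(3)] by simp
    qed
    have dec: "D2 (y, r) < D2 (x, r)" if "x \<in> {lo..m}" "y \<in> {lo..m}" "x < y" for x y
    proof -
      have "\<exists>z>x. z < y \<and> D2 (y, r) - D2 (x, r) = (y - x) * D12 (z, r)"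
        by (rule MVT2[OF that(3)]) (use that m_le in \<open>auto intro!: g0d\<close>)
      then obtain z where z: "x < z" "z < y" "D2 (y, r) - D2 (x, r) = (y - x) * D12 (z, r)" by blast
      have zi: "z \<in> {lo..hi}" using z that m_le by auto
      have "D12 (z, r) < 0" using D12H[OF zi] neg[OF zi] D1pos[OF zi] z that
        by (simp add: mult_neg_pos)
      then show ?thesis using z that by (smt (verit) mult_pos_neg)
    qed
    have inc: "D2 (x, r) < D2 (y, r)" if "x \<in> {m..hi}" "y \<in> {m..hi}" "x < y" for x y
    proof -
      have "\<exists>z>x. z < y \<and> D2 (y, r) - D2 (x, r) = (y - x) * D12 (z, r)"
        by (rule MVT2[OF that(3)]) (use that m_ge in \<open>auto intro!: g0d\<close>)
      then obtain z where z: "x < z" "z < y" "D2 (y, r) - D2 (x, r) = (y - x) * D12 (z, r)" by blast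
      have zi: "z \<in> {lo..hi}" using z that m_ge by auto
      have "D12 (z, r) > 0" using D12H[OF zi] pos[OF zi] D1pos[OF zi] z that
        by simp
      then show ?thesis using z that by (smt (verit) mult_pos_pos)
    qed
    show ?thesis unfolding strictly_single_dipped_def
    proof (intro bexI[of _ m] conjI ballI impI)
      fix x y assume "x \<in> {lo..m}" "y \<in> {lo..m}" "x < y"
      then show "dv_dr v y r < dv_dr v x r"
        using dec[of x y] m_le by (simp add: dv_dr_eq inU)
    next
      fix x y assume "x \<in> {m..hi}" "y \<in> {m..hi}" "x < y"
      then show "dv_dr v x r < dv_dr v y r"
        using inc[of x y] m_ge by (simp add: dv_dr_eq inU)
    qed (use m_ge m_le in auto)
  qed
  have part1: "swingy_moderates v lo hi \<longleftrightarrow> (\<forall>t. deriv (deriv (\<lambda>t'. ln (q t'))) t < 0)"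
    if Qd: "\<forall>t. (Q has_real_derivative q t) (at t)" and qpos: "\<forall>t. q t > 0"
      and qd: "\<forall>t. q differentiable (at t)" and vQ: "\<forall>s\<in>{lo..hi}. \<forall>r. v s r = Q (s - r)"
    for Q q :: "real \<Rightarrow> real"
  proof -
    have Qc: "((\<lambda>s'. Q (s' - r')) has_real_derivative q (s - r')) (at s)" for s r'
      by (rule shift_deriv) (use Qd in blast)
    have D1q: "D1 (s, r') = q (s - r')" if "s \<in> {lo..hi}" for s r'
    proof (rule deriv_eq_on_interval[OF lohi that])
      show "((\<lambda>s'. v s' r') has_real_derivative D1 (s, r')) (at s)"
        using P1[OF dF inU[OF that]] unfolding D1_def F_def by simp
      show "((\<lambda>s'. Q (s' - r')) has_real_derivative q (s - r')) (at s)" by (rule Qc)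
      show "\<forall>y\<in>{lo..hi}. v y r' = Q (y - r')" using vQ by blast
    qed
    have qeq: "q = (\<lambda>t. D1 (lo, lo - t))"
      using D1q[of lo] lohi by (auto simp: fun_eq_iff)
    have dqd: "(q has_real_derivative - D12 (lo, lo - t)) (at t)" for t
    proof -
      have "((\<lambda>t. D1 (lo, lo - t)) has_real_derivative - D12 (lo, lo - t)) (at t)"
        unfolding D12_def by (rule refl_deriv[OF P2[OF dD1 inU]]) (use lohi in auto)
      then show ?thesis unfolding qeq by simp
    qed
    have dq_eq: "deriv q = (\<lambda>t. - D12 (lo, lo - t))"
      using dqd DERIV_imp_deriv by (auto simp: fun_eq_iff)
    have dq2: "\<exists>X. (deriv q has_real_derivative X) (at t)" for t
    proof -
      have "((\<lambda>t. - D12 (lo, lo - t)) has_real_derivative - (- frechet_derivative D12 (at (lo, lo - t)) (0, 1))) (at t)"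
        by (rule DERIV_minus, rule refl_deriv[OF P2[OF dD12 inU]]) (use lohi in auto)
      then show ?thesis unfolding dq_eq by blast
    qed
    define L1 where "L1 = deriv (\<lambda>t'. ln (q t'))"
    define L2 where "L2 = deriv L1"
    have L1_eq: "L1 = (\<lambda>t. deriv q t / q t)"
    proof
      fix t
      have "((\<lambda>t'. ln (q t')) has_real_derivative deriv q t / q t) (at t)"
        using dqd[of t] qpos DERIV_imp_deriv[OF dqd[of t]]
        by (auto intro!: derivative_eq_intros simp: field_simps)
      then show "L1 t = deriv q t / q t" unfolding L1_def by (rule DERIV_imp_deriv)
    qed
    have L1d: "(L1 has_real_derivative L2 t) (at t)" for t
    proof -
      obtain X where X: "(deriv q has_real_derivative X) (at t)" using dq2 by blast
      have "(L1 has_real_derivative (X * q t - deriv q t * (- D12 (lo, lo - t))) / (q t * q t)) (at t)"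
        unfolding L1_eq by (rule DERIV_divide[OF X dqd]) (use qpos in \<open>simp add: less_imp_neq[symmetric]\<close>)
      then show ?thesis unfolding L2_def using DERIV_imp_deriv by metis
    qed
    have Hq: "H r s = - L1 (s - r)" if "s \<in> {lo..hi}" for s r
    proof -
      have "((\<lambda>y. D1 (s, y)) has_real_derivative D12 (s, r)) (at r)"
        using P2[OF dD1 inU[OF that]] unfolding D12_def by simp
      moreover have "((\<lambda>y. D1 (s, y)) has_real_derivative - deriv q (s - r)) (at r)"
        unfolding D1q[OF that]
        by (rule refl_deriv) (use qd DERIV_deriv_iff_real_differentiable in blast)
      ultimately have "D12 (s, r) = - deriv q (s - r)" using DERIV_unique by force
      then show ?thesis using Hval[OF inU[OF that] D1pos[OF that]] D1q[OF that] L1_eq by simp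
    qed
    have dH: "deriv (H r) s = - L2 (s - r)" if "s \<in> {lo..hi}" for s r
    proof (rule deriv_eq_on_interval[OF lohi that Hdiff[OF that]])
      show "((\<lambda>s. - L1 (s - r)) has_real_derivative - L2 (s - r)) (at s)"
        by (rule DERIV_minus, rule shift_deriv, rule L1d)
      show "\<forall>y\<in>{lo..hi}. H r y = - L1 (y - r)" using Hq by blast
    qed
    show ?thesis
    proof
      assume sw: "swingy_moderates v lo hi"
      show "\<forall>t. deriv (deriv (\<lambda>t'. ln (q t'))) t < 0"
      proof
        fix t
        have "lo \<in> {lo..hi}" using lohi by simp
        then have "deriv (H (lo - t)) lo > 0" using sw sw_iff by blast
        then show "deriv (deriv (\<lambda>t'. ln (q t'))) t < 0"
          using dH[of lo "lo - t"] lohi unfolding L2_def L1_def by simp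
      qed
    next
      assume "\<forall>t. deriv (deriv (\<lambda>t'. ln (q t'))) t < 0"
      then show "swingy_moderates v lo hi" unfolding sw_iff
        using dH unfolding L2_def L1_def by auto
    qed
  qed
  show ?thesis using part1 part2 by blast
qed


theorem proposition5:
  fixes v :: "real \<Rightarrow> real \<Rightarrow> real" and lo hi :: real and U :: "(real \<times> real) set"
  assumes lohi: "lo < hi"
    and U_open: "open U" and U_dom: "{lo..hi} \<times> UNIV \<subseteq> U"
    and v_diff4: "n_times_differentiable_on 4 (\<lambda>(s, r). v s r) U"
    and v_range: "\<forall>s\<in>{lo..hi}. \<forall>r. 0 \<le> v s r \<and> v s r \<le> 1"
    and v_incr_s: "\<forall>r. \<forall>s1\<in>{lo..hi}. \<forall>s2\<in>{lo..hi}. s1 < s2 \<longrightarrow> v s1 r < v s2 r"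
    and v_s_pos: "\<forall>s\<in>{lo..hi}. \<forall>r. dv_ds v s r > 0"
    and v_decr_r: "\<forall>s\<in>{lo..hi}. \<forall>r1 r2. r1 < r2 \<longrightarrow> v s r2 < v s r1"
  shows "(\<forall>Q q :: real \<Rightarrow> real.
            ((\<forall>t. (Q has_real_derivative q t) (at t)) \<and>
             (Q \<longlongrightarrow> 0) at_bot \<and> (Q \<longlongrightarrow> 1) at_top \<and>
             (\<forall>t. q t > 0) \<and> (\<forall>t. q differentiable (at t)) \<and>
             (\<forall>s\<in>{lo..hi}. \<forall>r. v s r = Q (s - r)))
            \<longrightarrow> (swingy_moderates v lo hi \<longleftrightarrow>
                 (\<forall>t. deriv (deriv (\<lambda>t'. ln (q t'))) t < 0))) \<and>
         (swingy_moderates v lo hi \<longrightarrow>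
           (\<forall>r. strictly_single_dipped (\<lambda>s. dv_dr v s r) lo hi))"
  using main[OF lohi U_open U_dom v_diff4 v_s_pos] .

end
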